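(* If $t\le n-2$, then the action protocol $P^{\mathit{basic}}$ implements the knowledge-based program $\mathbf P^0$ in the EBA context $\gamma_{\mathit{basic},n,t}$, where $P^{\mathit{basic}}_i$ is: if $\mathit{decided}_i\ne\bot$ then $\mathtt{noop}$; else if $\mathit{init}_i=0$ or $\mathit{rd}_i=0$ then $\mathtt{decide}_i(0)$; else if $\#1_i>n-\mathit{time}_i$ or $\mathit{rd}_i=1$ then $\mathtt{decide}_i(1)$; else $\mathtt{noop}$.
   Context: Agents and runs. There are $n$ agents $\mathit{Agt}=\{1,\ldots,n\}$; time is $m\in\mathbb N$, and round $m+1$ is the step from time $m$ to time $m+1$. An information-exchange protocol $\mathcal E$ specifies for each agent $i$: a set $L_i$ of local states, a set $I_i\subseteq L_i$ of initial states, a set $A_i$ of actions, a set $M_i$ of messages, a function giving for $s\in L_i$, $a\in A_i$ and each agent $j$ the message $\mu_{ij}(s,a)\in M_i\cup\{\bot\}$ that $i$ sends to $j$ ($\bot$ means no message), and a transition function $\delta_i:L_i\times A_i\times\prod_j(M_j\cup\{\bot\})\to L_i$. A failure pattern is a pair $(\mathcal N,F)$ with $\mathcal N\subseteq\mathit{Agt}$ (the nonfaulty agents) and $F:\mathbb N\times\mathit{Agt}\times\mathit{Agt}\to\{0,1\}$, where $F(m,i,j)=0$ means the message from $i$ to $j$ in round $m+1$ is lost. The sending-omissions failure model $SO(t)$ ($t<n$) is the set of failure patterns with $|\mathit{Agt}\setminus\mathcal N|\le t$ such that $F(m,i,j)=0$ implies $i\notin\mathcal N$. An action protocol $P$ gives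 each agent $i$ a map $P_i:L_i\to A_i$. Given $\mathcal E$, a failure model $\mathcal F$ and $P$, each initial global state (a failure pattern $(\mathcal N,F)\in\mathcal F$ and an $s_i\in I_i$ for each $i$) determines a unique run $r$: if $r_i(k)$ is $i$'s local state at time $k$, then $i$ performs $a_i=P_i(r_i(k))$, agent $j$ receives $m'_{ij}=\mu_{ij}(r_i(k),a_i)$ if $F(k,i,j)=1$ and $\bot$ otherwise, and $r_i(k+1)=\delta_i(r_i(k),a_i,(m'_{1i},\ldots,m'_{ni}))$; the failure pattern is fixed in the run and $\mathcal N(r)$ denotes its nonfaulty set. $\mathcal R_{\mathcal E,\mathcal F,P}$ is the set of all such runs. An interpreted system $\mathcal I=(\mathcal R,\pi)$ is a set of runs with an interpretation $\pi$ of primitive propositions at points $(r,m)$. $\mathcal I,(r,m)\models K_i\varphi$ iff $\varphi$ holds at all points $(r',m')$ of $\mathcal I$ with $r'_i(m')=r_i(m)$; $\bigcirc\varphi$ holds at $(r,m)$ iff $\varphi$ holds at $(r,m+1)$; $\ominus\varphi$ holds at $(r,m)$ iff $m>0$ and $\varphi$ holds at $(r,m-1)$. EBA contexts. An EBA context is a tuple $\gamma=(\mathcal E,\mathcal F,\pi)$ such that: each $A_i=\{\mathtt{decide}_i(0),\mathtt{decide}_i(1),\mathtt{noop}\}$; local states have the form $\langle \mathit{time}_i,\mathit{init}_i,\mathit{decided}_i,\mathit{rd}_i,\ldots\rangle$ with $\mathit{time}_i\in\mathbb N$, $\mathit{init}_i\in\{0,1\}$ (initial preference), $\mathit{decided}_i,\mathit{rd}_i\in\{0,1,\bot\}$;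 initial states have the form $\langle 0,\mathit{init}_i,\bot,\bot,\ldots\rangle$; there are pairwise disjoint sets $M^0,M^1,M^2$ with $\bot\notin M^0\cup M^1$ such that an agent performing $\mathtt{decide}_i(0)$ (resp. $\mathtt{decide}_i(1)$, resp. $\mathtt{noop}$) sends every agent a message in $M^0$ (resp. $M^1$, resp. $M^2$); $\delta_i$ increments $\mathit{time}_i$, sets $\mathit{decided}_i:=v$ if the action is $\mathtt{decide}_i(v)$ (otherwise leaves it unchanged), and sets $\mathit{rd}_i$ to $0$ (resp. $1$) if in that round $i$ received a message from an agent performing $\mathtt{decide}(0)$ (resp. $\mathtt{decide}(1)$), and to $\bot$ otherwise; $\pi$ interprets $\mathit{init}_i=v$, $\mathit{decided}_i=v$, $\mathit{time}_i=k$ by reading $i$'s local state, and $i\in\mathcal N$ as true at $(r,m)$ iff $i\in\mathcal N(r)$. Abbreviations: $\mathit{jdecided}_i=v$ is $\mathit{decided}_i=v\wedge\ominus(\mathit{decided}_i=\bot)$; $\mathit{deciding}_i=v$ is $\mathit{decided}_i=\bot\wedge\bigcirc(\mathit{decided}_i=v)$. For an action protocol $P$, $\mathcal I_{\gamma,P}=(\mathcal R_{\mathcal E,\mathcal F,P},\pi)$. Knowledge-based programs. A knowledge-based program $\mathbf P=(\mathbf P_1,\ldots,\mathbf P_n)$ has each $\mathbf P_i$ generated by $\mathbf P_i::=a\mid\text{if }\varphi\text{ then }\mathbf P_i\text{ else }\mathbf P_i$ with $a\in A_i$ and each test $\varphi$ a Boolean combination of formulas $K_i\psi$ and propositions determined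 by $i$'s local state; its truth at a point depends only on $i$'s local state. Given $\mathcal I$ and a local state $s$ of $i$, $\mathbf P_i^{\mathcal I}(s)$ is the action obtained by evaluating the tests at $s$ in $\mathcal I$. An action protocol $P$ implements $\mathbf P$ in $\gamma$ if $P_i(s)=\mathbf P_i^{\mathcal I}(s)$ for every $i$ and every local state $s$ of $i$ arising in $\mathcal I=\mathcal I_{\gamma,P}$. The program $\mathbf P^0$: for each agent $i$, $\mathbf P^0_i$ is: if $\mathit{decided}_i\neq\bot$ then $\mathtt{noop}$; else if $\mathit{init}_i=0\vee K_i(\bigvee_{j\in\mathit{Agt}}\mathit{jdecided}_j=0)$ then $\mathtt{decide}_i(0)$; else if $K_i(\bigwedge_{j\in\mathit{Agt}}\neg(\mathit{deciding}_j=0))$ then $\mathtt{decide}_i(1)$; else $\mathtt{noop}$. Basic context. $\gamma_{\mathit{basic},n,t}=(\mathcal E_{\mathit{basic}}(n),SO(t),\pi_{\mathit{basic},n})$, where local states are $\langle\mathit{time}_i,\mathit{init}_i,\mathit{decided}_i,\mathit{rd}_i,\#1_i\rangle$ with $\#1_i\in\{0,\ldots,n\}$, initial states are $\langle0,\mathit{init}_i,\bot,\bot,0\rangle$, $M_i=\{0,1,(\mathit{init},1)\}$ ($M^0=\{0\},M^1=\{1\},M^2=\{(\mathit{init},1),\bot\}$), $\mu_{ij}(s,\mathtt{decide}_i(v))=v$, $\mu_{ij}(s,\mathtt{noop})=(\mathit{init},1)$ if $s$ has the form $\langle m,1,\bot,\bot,k\rangle$, and $\mu_{ij}(s,a)=\bot$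 otherwise; $\delta_i$ updates the first four components as in EBA contexts and sets $\#1_i$ to the number of $(\mathit{init},1)$ messages received in the current round if $\mathit{decided}_i=\bot$ and $i$ receives no message $0$ or $1$ in that round, and to $0$ otherwise; $\pi_{\mathit{basic},n}$ interprets $\mathit{time}_i=k$, $\mathit{init}_i=v$, $\mathit{decided}_i=v$, $\mathit{rd}_i=v$, $\#1_i=k$, $i\in\mathcal N$ in the obvious way. *)

theory Defs
  imports Main
begin

text \<open>Agents are 0, ..., n-1 (the paper's 1..n shifted by one).
  Three-valued components (values 0, 1, bottom) are encoded as bool option:
  None = bottom, Some False = 0, Some True = 1.  init is a bool (True = 1).\<close>

datatype action = Decide bool | Noop

datatype msg = MDec bool | MInit1   \<comment> \<open>MDec v is message v; MInit1 is (init,1)\<close>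

record lstate =
  ls_time :: nat
  ls_init :: bool
  ls_decided :: "bool option"
  ls_rd :: "bool option"
  ls_cnt :: nat     \<comment> \<open>the component #1\<close>

definition init_state :: "bool \<Rightarrow> lstate" where
  "init_state b = \<lparr>ls_time = 0, ls_init = b, ls_decided = None, ls_rd = None, ls_cnt = 0\<rparr>"

definition mu :: "lstate \<Rightarrow> action \<Rightarrow> msg option" where
  "mu s a = (case a of
      Decide v \<Rightarrow> Some (MDec v)
    | Noop \<Rightarrow> (if ls_init s \<and> ls_decided s = None \<and> ls_rd s = None then Some MInit1 else None))"

definition delta :: "nat \<Rightarrow> lstate \<Rightarrow> action \<Rightarrow> (nat \<Rightarrow> msg option) \<Rightarrow> lstate" where
  "delta n s a rcv =
     \<lparr>ls_time = Suc (ls_time s),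
      ls_init = ls_init s,
      ls_decided = (case a of Decide v \<Rightarrow> Some v | Noop \<Rightarrow> ls_decided s),
      ls_rd = (if \<exists>j<n. rcv j = Some (MDec False) then Some False
               else if \<exists>j<n. rcv j = Some (MDec True) then Some True else None),
      ls_cnt = (if ls_decided s = None \<and> \<not> (\<exists>j<n. rcv j = Some (MDec False) \<or> rcv j = Some (MDec True))
                then card {j. j < n \<and> rcv j = Some MInit1} else 0)\<rparr>"

text \<open>Failure patterns (N, F); F m i j = False means the message from i to j in round m+1 is lost.\<close>
type_synonym fpat = "nat set \<times> (nat \<Rightarrow> nat \<Rightarrow> nat \<Rightarrow> bool)"

definition SO :: "nat \<Rightarrow> nat \<Rightarrow> fpat set" where
  "SO n t = {(N, F). N \<subseteq> {..<n} \<and> card ({..<n} - N) \<le> t \<and>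
                     (\<forall>m i j. \<not> F m i j \<longrightarrow> i \<notin> N)}"

type_synonym protocol = "nat \<Rightarrow> lstate \<Rightarrow> action"

fun gstate :: "nat \<Rightarrow> protocol \<Rightarrow> fpat \<Rightarrow> (nat \<Rightarrow> bool) \<Rightarrow> nat \<Rightarrow> nat \<Rightarrow> lstate" where
  "gstate n P fp ini 0 = (\<lambda>i. init_state (ini i))"
| "gstate n P fp ini (Suc m) =
     (\<lambda>i. delta n (gstate n P fp ini m i) (P i (gstate n P fp ini m i))
           (\<lambda>j. if snd fp m j i then mu (gstate n P fp ini m j) (P j (gstate n P fp ini m j)) else None))"

text \<open>A run is given by its initial global state: a failure pattern and initial preferences.\<close>
type_synonym run = "fpat \<times> (nat \<Rightarrow> bool)"

definition runs :: "nat \<Rightarrow> nat \<Rightarrow> run set" where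
  "runs n t = SO n t \<times> UNIV"

definition lst :: "nat \<Rightarrow> protocol \<Rightarrow> run \<Rightarrow> nat \<Rightarrow> nat \<Rightarrow> lstate" where
  "lst n P r m i = gstate n P (fst r) (snd r) m i"

definition knows :: "nat \<Rightarrow> nat \<Rightarrow> protocol \<Rightarrow> nat \<Rightarrow> lstate \<Rightarrow> (run \<Rightarrow> nat \<Rightarrow> bool) \<Rightarrow> bool" where
  "knows n t P i s \<phi> = (\<forall>r\<in>runs n t. \<forall>m. lst n P r m i = s \<longrightarrow> \<phi> r m)"

definition jdecided0 :: "nat \<Rightarrow> protocol \<Rightarrow> run \<Rightarrow> nat \<Rightarrow> nat \<Rightarrow> bool" where
  "jdecided0 n P r m j = (ls_decided (lst n P r m j) = Some False \<and>
                          m > 0 \<and> ls_decided (lst n P r (m - 1) j) = None)"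

definition deciding0 :: "nat \<Rightarrow> protocol \<Rightarrow> run \<Rightarrow> nat \<Rightarrow> nat \<Rightarrow> bool" where
  "deciding0 n P r m j = (ls_decided (lst n P r m j) = None \<and>
                          ls_decided (lst n P r (Suc m) j) = Some False)"

definition P0 :: "nat \<Rightarrow> nat \<Rightarrow> protocol \<Rightarrow> nat \<Rightarrow> lstate \<Rightarrow> action" where
  "P0 n t P i s =
     (if ls_decided s \<noteq> None then Noop
      else if \<not> ls_init s \<or> knows n t P i s (\<lambda>r m. \<exists>j<n. jdecided0 n P r m j) then Decide False
      else if knows n t P i s (\<lambda>r m. \<forall>j<n. \<not> deciding0 n P r m j) then Decide True
      else Noop)"

definition implements :: "nat \<Rightarrow> nat \<Rightarrow> protocol \<Rightarrow> bool" where
  "implements n t P = (\<forall>i<n. \<forall>r\<in>runs n t. \<forall>m.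
      P i (lst n P r m i) = P0 n t P i (lst n P r m i))"

definition Pbasic :: "nat \<Rightarrow> protocol" where
  "Pbasic n i s =
     (if ls_decided s \<noteq> None then Noop
      else if \<not> ls_init s \<or> ls_rd s = Some False then Decide False
      else if int (ls_cnt s) > int n - int (ls_time s) \<or> ls_rd s = Some True then Decide True
      else Noop)"

end

theory Submission
  imports Defs
begin


context fixes n :: nat and fp :: fpat and ini :: "nat \<Rightarrow> bool"
begin

abbreviation g where "g \<equiv> gstate n (Pbasic n) fp ini"

declare gstate.simps(2)[simp del]

lemma g_Suc: "g (Suc k) a = delta n (g k a) (Pbasic n a (g k a))
   (\<lambda>j. if snd fp k j a then mu (g k j) (Pbasic n j (g k j)) else None)"
  by (simp add: gstate.simps(2))

lemma g_time[simp]: "ls_time (g k a) = k"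
  by (induction k arbitrary: a) (auto simp: g_Suc delta_def init_state_def)

lemma g_init[simp]: "ls_init (g k a) = ini a"
  by (induction k arbitrary: a) (auto simp: g_Suc delta_def init_state_def)

lemma g_dec_step: "ls_decided (g (Suc k) a) = (case Pbasic n a (g k a) of Decide v \<Rightarrow> Some v | Noop \<Rightarrow> ls_decided (g k a))"
  by (simp add: g_Suc delta_def)

lemma Pb_decided: "ls_decided s \<noteq> None \<Longrightarrow> Pbasic n a s = Noop"
  by (simp add: Pbasic_def)

lemma dec_mono1: "ls_decided (g k a) \<noteq> None \<Longrightarrow> ls_decided (g (Suc k) a) = ls_decided (g k a)"
  by (simp add: g_dec_step Pb_decided)

lemma dec_mono: assumes "ls_decided (g k a) \<noteq> None" "k \<le> k'" shows "ls_decided (g k' a) = ls_decided (g k a)"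
  using assms(2) proof (induction k' rule: dec_induct)
  case base then show ?case by simp
next
  case (step k') then show ?case using dec_mono1[of k' a] assms(1) by simp
qed

lemma g0[simp]: "g 0 a = init_state (ini a)" by simp

lemma rd_ex: "ls_rd (g (Suc k) a) = (if \<exists>j<n. snd fp k j a \<and> mu (g k j) (Pbasic n j (g k j)) = Some (MDec False) then Some False
   else if \<exists>j<n. snd fp k j a \<and> mu (g k j) (Pbasic n j (g k j)) = Some (MDec True) then Some True else None)"
  unfolding g_Suc delta_def by (auto simp: if_split_mem2 split: if_splits; metis option.distinct(1))

lemma mu_MDec: "mu s act = Some (MDec v) \<longleftrightarrow> act = Decide v"
  by (cases act) (auto simp: mu_def)

lemma mu_MInit1: "mu s act = Some MInit1 \<longleftrightarrow> act = Noop \<and> ls_init s \<and> ls_decided s = None \<and> ls_rd s = None"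
  by (cases act) (auto simp: mu_def)

lemma rd_False: "ls_rd (g (Suc k) a) = Some False \<Longrightarrow> \<exists>b<n. snd fp k b a \<and> Pbasic n b (g k b) = Decide False"
  by (auto simp: rd_ex mu_MDec split: if_splits)

lemma rd_True: "ls_rd (g (Suc k) a) = Some True \<Longrightarrow> \<exists>b<n. snd fp k b a \<and> Pbasic n b (g k b) = Decide True"
  by (auto simp: rd_ex mu_MDec split: if_splits)

lemma rd_some: "b < n \<Longrightarrow> snd fp k b a \<Longrightarrow> Pbasic n b (g k b) = Decide v \<Longrightarrow> ls_rd (g (Suc k) a) \<noteq> None"
  by (cases v) (auto simp: rd_ex mu_MDec)

lemma cnt_formula: "ls_rd (g (Suc k) a) = None \<Longrightarrow> ls_decided (g k a) = None \<Longrightarrow>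
   ls_cnt (g (Suc k) a) = card {b. b<n \<and> snd fp k b a \<and> mu (g k b) (Pbasic n b (g k b)) = Some MInit1}"
  by (auto simp: g_Suc delta_def split: if_splits intro!: arg_cong[where f=card])

lemma cnt_True: "ls_rd (g (Suc k) a) = Some True \<Longrightarrow> ls_cnt (g (Suc k) a) = 0"
  by (auto simp: g_Suc delta_def split: if_splits)

lemma cnt_le: "ls_cnt (g k a) \<le> n"
proof (cases k)
  case 0 then show ?thesis by (simp add: init_state_def)
next
  case (Suc k')
  have "card {j. j < n \<and> P j} \<le> n" for P
    using card_mono[of "{..<n}" "{j. j < n \<and> P j}"] by auto
  then show ?thesis using Suc by (simp add: g_Suc delta_def)
qed

lemma Noop_undec: "ls_decided s = None \<Longrightarrow> Pbasic n b s = Noop \<Longrightarrow>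
   ls_init s \<and> ls_rd s = None \<and> \<not> int (ls_cnt s) > int n - int (ls_time s)"
  by (cases "ls_rd s") (auto simp: Pbasic_def split: if_splits)

lemma Pb_0: "Pbasic n a (init_state b) \<noteq> Decide True"
  by (auto simp: Pbasic_def init_state_def)

definition Z where "Z k \<longleftrightarrow> (\<exists>a<n. ls_decided (g k a) = None \<and> ls_decided (g (Suc k) a) = Some False)"

lemma Pb_DF_undec: "ls_decided s = None \<Longrightarrow> Pbasic n a s = Decide False \<Longrightarrow> \<not> ls_init s \<or> ls_rd s = Some False"
  by (auto simp: Pbasic_def split: if_splits)

lemma Pb_DT: "Pbasic n a s = Decide True \<Longrightarrow> ls_decided s = None \<and> ls_init s \<and> ls_rd s \<noteq> Some False \<and>
   (int (ls_cnt s) > int n - int (ls_time s) \<or> ls_rd s = Some True)"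
  by (auto simp: Pbasic_def split: if_splits)

lemma Z_step: assumes "Z (Suc k)" shows "Z k"
proof -
  from assms obtain a where a: "a < n" "ls_decided (g (Suc k) a) = None" "ls_decided (g (Suc (Suc k)) a) = Some False"
    unfolding Z_def by blast
  have act: "Pbasic n a (g (Suc k) a) = Decide False"
    using a(2,3) by (auto simp: g_dec_step split: action.splits)
  have "ini a"
  proof (rule ccontr)
    assume "\<not> ini a"
    then have "Pbasic n a (g 0 a) = Decide False" by (simp add: Pbasic_def init_state_def)
    then have "ls_decided (g (Suc 0) a) = Some False" by (simp add: g_dec_step)
    then have "ls_decided (g (Suc k) a) = Some False" using dec_mono[of "Suc 0" a "Suc k"] by simp
    with a(2) show False by simp
  qed
  then have "ls_rd (g (Suc k) a) = Some False" using Pb_DF_undec[OF a(2) act] by simp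
  then obtain b where b: "b < n" "Pbasic n b (g k b) = Decide False" using rd_False by blast
  have "ls_decided (g k b) = None" using b(2) Pb_decided by fastforce
  moreover have "ls_decided (g (Suc k) b) = Some False" using b(2) by (simp add: g_dec_step)
  ultimately show ?thesis using b(1) unfolding Z_def by blast
qed

lemma Z_le: assumes "Z k" "j \<le> k" shows "Z j"
  using assms(2,1) proof (induction k rule: dec_induct)
  case base then show ?case by simp
next
  case (step k) then show ?case using Z_step by blast
qed

definition D where "D k = {a. a < n \<and> ls_decided (g k a) = Some False}"

lemma D_mono: "D k \<subseteq> D (Suc k)"
  unfolding D_def using dec_mono1 by fastforce

lemma Z_card: "Z k \<Longrightarrow> k \<le> card (D k)"
proof (induction k)
  case 0 then show ?case by simp
next
  case (Suc k)
  then have "Z k" using Z_step by blast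
  with Suc.IH have ih: "k \<le> card (D k)" by simp
  from \<open>Z k\<close> obtain b where b: "b < n" "ls_decided (g k b) = None" "ls_decided (g (Suc k) b) = Some False"
    unfolding Z_def by blast
  have sub: "insert b (D k) \<subseteq> D (Suc k)" using D_mono b unfolding D_def by auto
  have nb: "b \<notin> D k" using b unfolding D_def by auto
  have fk: "finite (D (Suc k))" "finite (D k)" unfolding D_def by auto
  have "card (insert b (D k)) \<le> card (D (Suc k))" by (rule card_mono[OF fk(1) sub])
  moreover have "card (insert b (D k)) = Suc (card (D k))" using nb fk(2) by simp
  ultimately show ?case using ih by simp
qed

lemma Z_X: assumes "Z (Suc k)" "ls_decided (g (Suc k) a) = None" "ls_rd (g (Suc k) a) = None"
  shows "ls_cnt (g (Suc k) a) + Suc k \<le> n"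
proof -
  have dk: "ls_decided (g k a) = None" using assms(2) dec_mono1[of k a] by fastforce
  define S where "S = {b. b<n \<and> snd fp k b a \<and> mu (g k b) (Pbasic n b (g k b)) = Some MInit1}"
  have cnt: "ls_cnt (g (Suc k) a) = card S" using cnt_formula[OF assms(3) dk] S_def by simp
  have disj: "S \<inter> D (Suc k) = {}"
  proof -
    { fix b assume "b \<in> S"
      then have "Pbasic n b (g k b) = Noop" "ls_decided (g k b) = None" unfolding S_def mu_MInit1 by auto
      then have "ls_decided (g (Suc k) b) = None" by (simp add: g_dec_step)
      then have "b \<notin> D (Suc k)" unfolding D_def by simp }
    then show ?thesis by blast
  qed
  have sub: "S \<union> D (Suc k) \<subseteq> {..<n}" unfolding S_def D_def by auto
  have fin: "finite S" "finite (D (Suc k))" unfolding S_def D_def by auto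
  have "card S + card (D (Suc k)) = card (S \<union> D (Suc k))" using card_Un_disjoint[OF fin disj] by simp
  also have "\<dots> \<le> n" using card_mono[OF _ sub] by simp
  finally show ?thesis using Z_card[OF assms(1)] cnt by simp
qed

lemma L_dec1: "Pbasic n a (g k a) = Decide True \<Longrightarrow> \<not> Z k"
proof (induction k arbitrary: a)
  case 0 then show ?case using Pb_0 by simp
next
  case (Suc k)
  have u: "ls_decided (g (Suc k) a) = None" using Suc.prems Pb_decided by fastforce
  have c: "ls_rd (g (Suc k) a) \<noteq> Some False" "int (ls_cnt (g (Suc k) a)) > int n - int (Suc k) \<or> ls_rd (g (Suc k) a) = Some True"
    using Pb_DT[OF Suc.prems] by auto
  show ?case
  proof (cases "ls_rd (g (Suc k) a)")
    case None
    then have "int (ls_cnt (g (Suc k) a)) > int n - int (Suc k)" using c by simp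
    then show ?thesis using Z_X[OF _ u None] by fastforce
  next
    case (Some v)
    then have "v = True" using c by (cases v) auto
    then obtain b where "b < n" "Pbasic n b (g k b) = Decide True" using rd_True Some by blast
    then have "\<not> Z k" using Suc.IH by blast
    then show ?thesis using Z_step by blast
  qed
qed

lemma undec_before: assumes "ls_decided (g m a) = None" "k < m"
  shows "ls_decided (g k a) = None \<and> Pbasic n a (g k a) = Noop"
proof -
  have 1: "ls_decided (g k a) = None"
    using dec_mono[of k a m] assms by fastforce
  have "Pbasic n a (g k a) = Noop"
  proof (cases "Pbasic n a (g k a)")
    case (Decide v)
    then have "ls_decided (g (Suc k) a) = Some v" by (simp add: g_dec_step)
    then have "ls_decided (g m a) = Some v" using dec_mono[of "Suc k" a m] assms(2) by simp
    with assms(1) show ?thesis by simp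
  qed simp
  with 1 show ?thesis by simp
qed

lemma Ncount: assumes so: "fp \<in> SO n t"
  and rd: "\<forall>j. 1 \<le> j \<and> j \<le> Suc k \<longrightarrow> ls_rd (g j a) = None"
  and dk: "ls_decided (g k a) = None"
  shows "n - t \<le> ls_cnt (g (Suc k) a)"
proof -
  obtain N F where fpd: "fp = (N, F)" by (cases fp)
  have NS: "N \<subseteq> {..<n}" "card ({..<n} - N) \<le> t" "\<And>m i j. \<not> F m i j \<Longrightarrow> i \<notin> N"
    using so fpd unfolding SO_def by auto
  have del: "b \<in> N \<Longrightarrow> snd fp j b c" for b j c using NS(3) fpd by fastforce
  have und: "\<forall>j\<le>k. ls_decided (g j b) = None \<and> (j < k \<longrightarrow> Pbasic n b (g j b) = Noop)" if "b \<in> N" for b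
  proof (intro allI impI)
    fix j assume "j \<le> k"
    then show "ls_decided (g j b) = None \<and> (j < k \<longrightarrow> Pbasic n b (g j b) = Noop)"
    proof (induction j)
      case 0
      have "ls_decided (g 0 b) = None" by (simp add: init_state_def)
      moreover have "Pbasic n b (g 0 b) = Noop" if "0 < k"
      proof (cases "Pbasic n b (g 0 b)")
        case (Decide v)
        then have "ls_rd (g (Suc 0) a) \<noteq> None" using rd_some[of b 0 a v] del[OF \<open>b\<in>N\<close>] NS(1) \<open>b\<in>N\<close> by auto
        then show ?thesis using rd that by auto
      qed simp
      ultimately show ?case by simp
    next
      case (Suc j)
      then have ih: "ls_decided (g j b) = None" "Pbasic n b (g j b) = Noop" by auto
      have "ls_decided (g (Suc j) b) = None" using ih by (simp add: g_dec_step)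
      moreover have "Pbasic n b (g (Suc j) b) = Noop" if "Suc j < k"
      proof (cases "Pbasic n b (g (Suc j) b)")
        case (Decide v)
        then have "ls_rd (g (Suc (Suc j)) a) \<noteq> None" using rd_some[of b "Suc j" a v] del[OF \<open>b\<in>N\<close>] NS(1) \<open>b\<in>N\<close> by auto
        then show ?thesis using rd that by auto
      qed simp
      ultimately show ?case by simp
    qed
  qed
  define S where "S = {b. b<n \<and> snd fp k b a \<and> mu (g k b) (Pbasic n b (g k b)) = Some MInit1}"
  have "N \<subseteq> S"
  proof
    fix b assume b: "b \<in> N"
    have u: "ls_decided (g k b) = None" using und[OF b] by simp
    have noop: "Pbasic n b (g k b) = Noop"
    proof (cases "Pbasic n b (g k b)")
      case (Decide v)
      then have "ls_rd (g (Suc k) a) \<noteq> None" using rd_some[of b k a v] del[OF b] NS(1) b by auto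
      then show ?thesis using rd by auto
    qed simp
    show "b \<in> S" unfolding S_def using Noop_undec[OF u noop] u noop del[OF b] NS(1) b
      by (auto simp: mu_MInit1)
  qed
  moreover have "finite S" unfolding S_def by auto
  ultimately have "card N \<le> card S" by (simp add: card_mono)
  moreover have "ls_cnt (g (Suc k) a) = card S" using cnt_formula[OF _ dk] rd S_def by simp
  moreover have "card ({..<n} - N) = n - card N" using NS(1) by (simp add: card_Diff_subset finite_subset)
  ultimately show ?thesis using NS(2) by linarith
qed

end


declare gstate.simps(2)[simp del]

definition Ust :: "nat \<Rightarrow> nat \<Rightarrow> lstate" where
  "Ust c k = \<lparr>ls_time = k, ls_init = True, ls_decided = None, ls_rd = None, ls_cnt = (if k = 0 then 0 else c)\<rparr>"

definition CS :: "nat \<Rightarrow> nat \<Rightarrow> nat \<Rightarrow> lstate" where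
  "CS c j k = (if k < j then Ust c k
     else if k = j then \<lparr>ls_time = j, ls_init = (j \<noteq> 0), ls_decided = None,
                         ls_rd = (if j = 0 then None else Some False), ls_cnt = 0\<rparr>
     else \<lparr>ls_time = k, ls_init = (j \<noteq> 0), ls_decided = Some False, ls_rd = None,
           ls_cnt = (if k = Suc j then c else 0)\<rparr>)"

definition Fgen :: "nat set \<Rightarrow> (nat \<Rightarrow> nat) \<Rightarrow> nat \<Rightarrow> nat \<Rightarrow> nat \<Rightarrow> nat set \<Rightarrow> nat \<Rightarrow> nat \<Rightarrow> nat \<Rightarrow> bool" where
  "Fgen N l q m i C k a b = (a \<in> N \<or> (Suc k < q \<and> a = l k \<and> b = l (Suc k)) \<or> (Suc k = m \<and> b = i \<and> a \<in> C))"

definition inigen :: "(nat \<Rightarrow> nat) \<Rightarrow> nat \<Rightarrow> nat \<Rightarrow> bool" where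
  "inigen l q a = (\<not> (0 < q \<and> a = l 0))"

definition Mg :: "(nat \<Rightarrow> nat) \<Rightarrow> nat \<Rightarrow> nat \<Rightarrow> nat \<Rightarrow> msg option" where
  "Mg l q k b = (if k < q \<and> b = l k then Some (MDec False)
     else if (\<exists>j<q. j < k \<and> b = l j) then None else Some MInit1)"

lemma delta_fields: assumes "(\<exists>j<n. R j = Some (MDec False)) \<longleftrightarrow> PZ" "\<not>(\<exists>j<n. R j = Some (MDec True))"
   "{j. j<n \<and> R j = Some MInit1} = S"
 shows "delta n s act R = \<lparr>ls_time = Suc (ls_time s), ls_init = ls_init s,
   ls_decided = (case act of Decide v \<Rightarrow> Some v | Noop \<Rightarrow> ls_decided s),
   ls_rd = (if PZ then Some False else None), ls_cnt = (if ls_decided s = None \<and> \<not>PZ then card S else 0)\<rparr>"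
  unfolding delta_def using assms by auto

lemma Pb_Ust: "k \<le> t \<Longrightarrow> t < n \<Longrightarrow> Pbasic n a (Ust (n - t) k) = Noop"
  by (auto simp: Pbasic_def Ust_def)

lemma mu_Ust: "mu (Ust c k) Noop = Some MInit1"
  by (simp add: mu_def Ust_def)

context
  fixes n t :: nat and N C :: "nat set" and l :: "nat \<Rightarrow> nat" and q m i :: nat
  assumes tn: "t < n" and Nsub: "N \<subseteq> {..<n}" and cardN: "card N = n - t"
  and Csub: "C \<subseteq> {..<n} - N" and qm: "q \<le> Suc m" and mt: "m \<le> Suc t"
  and lrange: "\<forall>j<q. l j < n" and linj: "inj_on l {..<q}" and li: "\<forall>j<q. l j \<noteq> i"
  and lC: "\<forall>j<q. l j \<notin> C" and lN: "\<forall>j<q. j < m \<longrightarrow> l j \<notin> N"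
begin

abbreviation "G \<equiv> gstate n (Pbasic n) (N, Fgen N l q m i C) (inigen l q)"

definition Ilast where "Ilast = \<lparr>ls_time = m, ls_init = True, ls_decided = None, ls_rd = None, ls_cnt = n - t + card C\<rparr>"

definition INV where "INV k \<longleftrightarrow> (\<forall>j<q. G k (l j) = CS (n - t) j k) \<and>
   (\<forall>a. a \<notin> l ` {..<q} \<longrightarrow> G k a = (if a = i \<and> k = m \<and> 0 < m then Ilast else Ust (n - t) k))"

lemma linj': "j < q \<Longrightarrow> j' < q \<Longrightarrow> l j = l j' \<longleftrightarrow> j = j'"
  using linj by (auto dest: inj_onD)

lemma INV0: "INV 0"
  unfolding INV_def
proof (intro conjI allI impI)
  fix j assume "j < q"
  then show "G 0 (l j) = CS (n - t) j 0"
    by (cases j) (auto simp: CS_def Ust_def init_state_def inigen_def linj')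
next
  fix a assume "a \<notin> l ` {..<q}"
  then have "inigen l q a" by (auto simp: inigen_def)
  then show "G 0 a = (if a = i \<and> 0 = m \<and> 0 < m then Ilast else Ust (n - t) 0)"
    by (auto simp: Ust_def init_state_def)
qed

lemma msg: assumes "INV k" "k < m"
  shows "mu (G k b) (Pbasic n b (G k b)) = Mg l q k b"
proof (cases "b \<in> l ` {..<q}")
  case True
  then obtain j where j: "j < q" "b = l j" by auto
  have st: "G k b = CS (n - t) j k" using assms(1) j unfolding INV_def by auto
  have kt: "k \<le> t" using assms(2) mt by simp
  show ?thesis
  proof (cases "k < j")
    case True
    have "\<not> (k < q \<and> l j = l k)" using True j linj' by (metis less_trans less_not_refl)
    moreover have "\<not> (\<exists>j'<q. j' < k \<and> l j = l j')" using True j linj' by fastforce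
    ultimately show ?thesis using True st j Pb_Ust[OF kt tn] mu_Ust by (simp add: CS_def Mg_def)
  next
    case False
    show ?thesis
    proof (cases "k = j")
      case True
      then show ?thesis using st j by (auto simp: CS_def Mg_def Pbasic_def mu_def)
    next
      case False
      then have "j < k" using \<open>\<not> k < j\<close> by simp
      moreover have "\<not> (k < q \<and> l j = l k)" using False j linj' by metis
      ultimately show ?thesis using False st j by (auto simp: CS_def Mg_def Pbasic_def mu_def)
    qed
  qed
next
  case False
  have st: "G k b = Ust (n - t) k" using assms False unfolding INV_def by auto
  have kt: "k \<le> t" using assms(2) mt by simp
  have "\<not> (k < q \<and> b = l k)" "\<not> (\<exists>j<q. j < k \<and> b = l j)" using False by auto
  then show ?thesis using st Pb_Ust[OF kt tn] mu_Ust by (simp add: Mg_def)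
qed

lemma INV_step: assumes "INV k" "Suc k \<le> m" shows "INV (Suc k)"
proof -
  have km: "k < m" using assms(2) by simp
  have kt: "k \<le> t" using km mt by simp
  define c where "c = n - t"
  define R where "R a = (\<lambda>b. if Fgen N l q m i C k b a then Mg l q k b else None)" for a
  have GS0: "G (Suc k) a = delta n (G k a) (Pbasic n a (G k a)) (R a)" for a
    unfolding R_def by (subst g_Suc) (simp only: msg[OF assms(1) km] snd_conv)
  have E0: "(\<exists>b<n. R a b = Some (MDec False)) \<longleftrightarrow> (Suc k < q \<and> a = l (Suc k))" for a
  proof
    assume "\<exists>b<n. R a b = Some (MDec False)"
    then obtain b where b: "Fgen N l q m i C k b a" "Mg l q k b = Some (MDec False)"
      by (auto simp: R_def split: if_splits)
    then have bk: "k < q" "b = l k" by (auto simp: Mg_def split: if_splits)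
    then have "b \<notin> N" "b \<notin> C" using lN lC km by auto
    then show "Suc k < q \<and> a = l (Suc k)" using b(1) by (auto simp: Fgen_def)
  next
    assume h: "Suc k < q \<and> a = l (Suc k)"
    then have "l k < n" using lrange by simp
    moreover have "Fgen N l q m i C k (l k) a" using h by (simp add: Fgen_def)
    moreover have "Mg l q k (l k) = Some (MDec False)" using h by (simp add: Mg_def)
    ultimately show "\<exists>b<n. R a b = Some (MDec False)" by (auto simp: R_def)
  qed
  have E1: "\<not> (\<exists>b<n. R a b = Some (MDec True))" for a
    by (auto simp: Mg_def R_def)
  have ES: "{b. b < n \<and> R a b = Some MInit1}
      = N \<union> (if Suc k = m \<and> a = i then C else {})" for a
  proof (intro set_eqI iffI)
    fix b assume "b \<in> {b. b < n \<and> R a b = Some MInit1}"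
    then have b: "Fgen N l q m i C k b a" "\<not> (k < q \<and> b = l k)"
      by (auto simp: Mg_def R_def split: if_splits)
    then show "b \<in> N \<union> (if Suc k = m \<and> a = i then C else {})"
      by (auto simp: Fgen_def)
  next
    fix b assume b: "b \<in> N \<union> (if Suc k = m \<and> a = i then C else {})"
    have nl: "\<not> (\<exists>j<q. j \<le> k \<and> b = l j)"
    proof
      assume "\<exists>j<q. j \<le> k \<and> b = l j"
      then obtain j where "j < q" "j \<le> k" "b = l j" by auto
      then show False using b lN lC km by (auto split: if_splits)
    qed
    have "b < n" using b Nsub Csub by (auto split: if_splits)
    moreover have "Fgen N l q m i C k b a" using b by (auto simp: Fgen_def split: if_splits)
    moreover have "Mg l q k b = Some MInit1" using nl unfolding Mg_def by (auto simp: less_imp_le)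
    ultimately show "b \<in> {b. b < n \<and> R a b = Some MInit1}"
      by (simp add: R_def)
  qed
  have GS: "G (Suc k) a = \<lparr>ls_time = Suc (ls_time (G k a)), ls_init = ls_init (G k a),
   ls_decided = (case Pbasic n a (G k a) of Decide v \<Rightarrow> Some v | Noop \<Rightarrow> ls_decided (G k a)),
   ls_rd = (if Suc k < q \<and> a = l (Suc k) then Some False else None),
   ls_cnt = (if ls_decided (G k a) = None \<and> \<not>(Suc k < q \<and> a = l (Suc k))
      then card (N \<union> (if Suc k = m \<and> a = i then C else {})) else 0)\<rparr>" for a
    unfolding GS0 by (rule delta_fields[OF E0 E1 ES])
  have cardES: "card (N \<union> (if Suc k = m \<and> a = i then C else {})) = n - t + (if Suc k = m \<and> a = i then card C else 0)" for a
  proof -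
    have fN: "finite N" using Nsub finite_subset by blast
    have "finite C" using Csub by (meson Diff_subset finite_lessThan finite_subset subset_trans)
    moreover have "N \<inter> C = {}" using Csub by auto
    ultimately show ?thesis using cardN fN by (auto simp: card_Un_disjoint)
  qed
  note D = GS cardES cardN
  show ?thesis unfolding INV_def
  proof (intro conjI allI impI)
    fix j assume jq: "j < q"
    have st: "G k (l j) = CS (n - t) j k" using assms(1) jq unfolding INV_def by auto
    have ni: "l j \<noteq> i" using li jq by simp
    consider "Suc k < j" | "Suc k = j" | "k = j" | "j < k" by linarith
    then show "G (Suc k) (l j) = CS (n - t) j (Suc k)"
    proof cases
      case 1
      then have "l j \<noteq> l (Suc k)" using linj' jq by (metis less_trans not_less_iff_gr_or_eq)
      then show ?thesis using 1 st ni Pb_Ust[OF kt tn] by (simp add: D CS_def Ust_def)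
    next
      case 2
      then have jq': "Suc k < q" using jq by simp
      have st': "G k (l (Suc k)) = Ust (n-t) k" using st 2 by (simp add: CS_def)
      have "G (Suc k) (l (Suc k)) = CS (n - t) (Suc k) (Suc k)"
        using st' jq' Pb_Ust[OF kt tn] by (simp add: D CS_def Ust_def)
      then show ?thesis using 2 by simp
    next
      case 3
      then have "l j \<noteq> l (Suc k) \<or> \<not> Suc k < q" using linj' jq by (metis n_not_Suc_n)
      then have h: "l k \<noteq> l (Suc k) \<or> \<not> Suc k < q" using 3 by simp
      have st3: "G k (l k) = CS (n - t) k k" using st 3 by simp
      have ni3: "l k \<noteq> i" using ni 3 by simp
      have "G (Suc k) (l k) = CS (n - t) k (Suc k)"
        using h st3 ni3 by (auto simp: D CS_def Ust_def Pbasic_def)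
      then show ?thesis using 3 by simp
    next
      case 4
      then have "l j \<noteq> l (Suc k) \<or> \<not> Suc k < q" using linj' jq by (metis less_SucI less_not_refl)
      then show ?thesis using 4 st ni by (auto simp: D CS_def Ust_def Pbasic_def)
    qed
  next
    fix a assume a: "a \<notin> l ` {..<q}"
    have st: "G k a = Ust (n - t) k" using assms(1) a km unfolding INV_def by auto
    have "\<not> (Suc k < q \<and> a = l (Suc k))" using a by auto
    then show "G (Suc k) a = (if a = i \<and> Suc k = m \<and> 0 < m then Ilast else Ust (n - t) (Suc k))"
      using st Pb_Ust[OF kt tn] by (auto simp: D Ust_def Ilast_def)
  qed
qed

lemma INV_all: "k \<le> m \<Longrightarrow> INV k"
proof (induction k)
  case 0 show ?case by (rule INV0)
next
  case (Suc k) then show ?case using INV_step by simp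
qed

lemma gen_i: "i \<notin> l ` {..<q} \<Longrightarrow> G m i = \<lparr>ls_time = m, ls_init = True, ls_decided = None, ls_rd = None,
   ls_cnt = (if m = 0 then 0 else n - t + card C)\<rparr>"
  using INV_all[of m] unfolding INV_def by (auto simp: Ilast_def Ust_def)

lemma gen_undec: "a \<notin> l ` {..<q} \<Longrightarrow> ls_decided (G m a) = None"
  using INV_all[of m] unfolding INV_def by (auto simp: Ilast_def Ust_def)

lemma gen_chain: assumes "q = Suc m"
  shows "ls_decided (G m (l m)) = None \<and> ls_decided (G (Suc m) (l m)) = Some False"
proof -
  have st: "G m (l m) = CS (n - t) m m" using INV_all[of m] assms unfolding INV_def by auto
  have "Pbasic n (l m) (G m (l m)) = Decide False" using st by (auto simp: CS_def Pbasic_def)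
  then show ?thesis using st by (simp add: g_dec_step CS_def)
qed

end


definition F1 :: "nat set \<Rightarrow> nat \<Rightarrow> nat \<Rightarrow> nat \<Rightarrow> nat \<Rightarrow> nat \<Rightarrow> nat \<Rightarrow> bool" where
  "F1 N f i m k a b = (a \<in> N \<or> (Suc (Suc k) = m \<and> b = f) \<or> (Suc k = m \<and> a = f \<and> b = i))"

lemma delta_fields2: assumes "\<not>(\<exists>j<n. R j = Some (MDec False))" "\<exists>j<n. R j = Some (MDec True)"
 shows "delta n s act R = \<lparr>ls_time = Suc (ls_time s), ls_init = ls_init s,
   ls_decided = (case act of Decide v \<Rightarrow> Some v | Noop \<Rightarrow> ls_decided s),
   ls_rd = Some True, ls_cnt = 0\<rparr>"
  unfolding delta_def using assms by auto

context
  fixes n t :: nat and N :: "nat set" and f i m :: nat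
  assumes tn: "t < n" and Nsub: "N \<subseteq> {..<n}" and cardN: "card N = n - t"
  and fn: "f < n" and fN: "f \<notin> N" and fi: "f \<noteq> i" and m2: "2 \<le> m" and mt: "m \<le> Suc t"
begin

abbreviation "H \<equiv> gstate n (Pbasic n) (N, F1 N f i m) (\<lambda>_. True)"

definition INV1 where "INV1 k \<longleftrightarrow> (\<forall>a. H k a = (if a = f \<and> Suc k = m then
   \<lparr>ls_time = k, ls_init = True, ls_decided = None, ls_rd = None, ls_cnt = n\<rparr> else Ust (n - t) k))"

lemma msg1: assumes "INV1 k" "k < m"
  shows "mu (H k b) (Pbasic n b (H k b)) = (if b = f \<and> Suc k = m then Some (MDec True) else Some MInit1)"
proof (cases "b = f \<and> Suc k = m")
  case True
  then have "H k b = \<lparr>ls_time = k, ls_init = True, ls_decided = None, ls_rd = None, ls_cnt = n\<rparr>"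
    using assms unfolding INV1_def by auto
  moreover have "int n > int n - int k" using True m2 by simp
  ultimately show ?thesis using True by (simp add: Pbasic_def mu_def)
next
  case False
  then have "H k b = Ust (n - t) k" using assms unfolding INV1_def by auto
  moreover have "k \<le> t" using assms(2) mt by simp
  ultimately show ?thesis using False Pb_Ust[of k t n b] tn mu_Ust by simp
qed

lemma INV1_all: "k < m \<Longrightarrow> INV1 k"
proof (induction k)
  case 0 show ?case unfolding INV1_def using m2 by (auto simp: Ust_def init_state_def)
next
  case (Suc k)
  then have ih: "INV1 k" and km: "k < m" by auto
  have kt: "k \<le> t" using km mt by simp
  define R where "R a = (\<lambda>b. if F1 N f i m k b a then Some MInit1 else None)" for a
  have GS0: "H (Suc k) a = delta n (H k a) (Pbasic n a (H k a)) (R a)" for a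
  proof -
    have "mu (H k b) (Pbasic n b (H k b)) = Some MInit1" for b using msg1[OF ih km] Suc.prems by simp
    then show ?thesis unfolding R_def by (subst g_Suc) (simp only: snd_conv)
  qed
  have E0: "(\<exists>b<n. R a b = Some (MDec False)) \<longleftrightarrow> False" for a by (auto simp: R_def)
  have E1: "\<not> (\<exists>b<n. R a b = Some (MDec True))" for a by (auto simp: R_def)
  have ES: "{b. b < n \<and> R a b = Some MInit1} = (if Suc (Suc k) = m \<and> a = f then {..<n} else N)" for a
    using Nsub Suc.prems by (auto simp: R_def F1_def)
  have st: "H k a = Ust (n - t) k" for a using ih Suc.prems unfolding INV1_def by auto
  have fNn: "finite N" using Nsub finite_subset by blast
  show ?case unfolding INV1_def
  proof
    fix a
    show "H (Suc k) a = (if a = f \<and> Suc (Suc k) = m then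
   \<lparr>ls_time = Suc k, ls_init = True, ls_decided = None, ls_rd = None, ls_cnt = n\<rparr> else Ust (n - t) (Suc k))"
      unfolding GS0 delta_fields[OF E0 E1 ES] using st Pb_Ust[OF kt tn] cardN by (auto simp: Ust_def)
  qed
qed

lemma R1_final: "H m i = \<lparr>ls_time = m, ls_init = True, ls_decided = None, ls_rd = Some True, ls_cnt = 0\<rparr>"
  and R1_nodec: "ls_decided (H m j) \<noteq> Some False"
proof -
  obtain k where k: "m = Suc k" using m2 by (cases m) auto
  have ih: "INV1 k" using INV1_all k by simp
  have km: "k < m" using k by simp
  have kt: "k \<le> t" using km mt by simp
  define R where "R = (\<lambda>b. if F1 N f i m k b i then (if b = f \<and> Suc k = m then Some (MDec True) else Some MInit1) else None)"
  have GS0: "H (Suc k) i = delta n (H k i) (Pbasic n i (H k i)) R"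
    using msg1[OF ih km] unfolding R_def by (subst g_Suc) (simp only: snd_conv)
  have E0: "\<not>(\<exists>b<n. R b = Some (MDec False))" by (auto simp: R_def)
  have E1: "\<exists>b<n. R b = Some (MDec True)" using fn k by (auto simp: R_def F1_def)
  have st: "H k i = Ust (n - t) k" using ih fi unfolding INV1_def by auto
  have mk: "H m a = H (Suc k) a" for a by (rule arg_cong[where f="\<lambda>x. H x a"]) (rule k)
  show "H m i = \<lparr>ls_time = m, ls_init = True, ls_decided = None, ls_rd = Some True, ls_cnt = 0\<rparr>"
    unfolding mk GS0 delta_fields2[OF E0 E1] using st Pb_Ust[OF kt tn] by (simp add: Ust_def) (simp add: k)
  have "Pbasic n j (H k j) \<noteq> Decide False"
  proof -
    have "mu (H k j) (Pbasic n j (H k j)) \<noteq> Some (MDec False)" using msg1[OF ih km] by simp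
    then show ?thesis by (auto simp: mu_def)
  qed
  moreover have "ls_decided (H k j) = None" using ih unfolding INV1_def by (auto simp: Ust_def)
  ultimately show "ls_decided (H m j) \<noteq> Some False"
    unfolding mk g_dec_step by (auto split: action.splits)
qed

end


definition sw :: "nat \<Rightarrow> nat \<Rightarrow> nat" where "sw i x = (if x = 0 then i else if x = i then 0 else x)"

lemma sw_sw[simp]: "sw i (sw i x) = x" by (auto simp: sw_def)
lemma sw_inj: "inj (sw i)" by (metis injI sw_sw)
lemma sw_eq[simp]: "sw i x = sw i y \<longleftrightarrow> x = y" by (metis sw_sw)
lemma sw_0[simp]: "sw i 0 = i" by (simp add: sw_def)
lemma sw_eq_i[simp]: "sw i x = i \<longleftrightarrow> x = 0" "i = sw i x \<longleftrightarrow> x = 0" by (metis sw_0 sw_eq)+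
lemma sw_lt: "i < n \<Longrightarrow> sw i x < n \<longleftrightarrow> x < n" by (auto simp: sw_def)
lemma sw_mem[simp]: "sw i x \<in> sw i ` A \<longleftrightarrow> x \<in> A" by (auto)
lemma sw_card: "card (sw i ` A) = card A" by (simp add: card_image inj_on_def)
lemma sw_sub: "i < n \<Longrightarrow> A \<subseteq> {..<n} \<Longrightarrow> sw i ` A \<subseteq> {..<n}" using sw_lt by auto

lemma runs_mem: "N \<subseteq> {..<n} \<Longrightarrow> card N = n - t \<Longrightarrow> t < n \<Longrightarrow> (\<forall>k a b. a \<in> N \<longrightarrow> F k a b) \<Longrightarrow>
   ((N, F), ini) \<in> runs n t"
  unfolding runs_def SO_def by (auto simp: card_Diff_subset finite_subset)

lemma W1: assumes tn: "t < n" and i: "i < n" and m1: "1 \<le> m" and mt: "m \<le> Suc t" and c: "n - t \<le> c" "c \<le> n"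
  shows "\<exists>r\<in>runs n t. lst n (Pbasic n) r m i = \<lparr>ls_time = m, ls_init = True, ls_decided = None, ls_rd = None, ls_cnt = c\<rparr>
     \<and> (\<forall>j<n. \<not> jdecided0 n (Pbasic n) r m j)"
proof -
  define N where "N = sw i ` ({0} \<union> {Suc t..<n})"
  define C where "C = sw i ` {1..<1 + (c - (n - t))}"
  define l :: "nat \<Rightarrow> nat" where "l = id"
  have Nsub: "N \<subseteq> {..<n}" unfolding N_def using i tn by (intro sw_sub) auto
  have cardN: "card N = n - t" unfolding N_def sw_card using tn by (subst card_Un_disjoint) auto
  have Csub: "C \<subseteq> {..<n} - N"
  proof -
    have "{1..<1 + (c - (n - t))} \<subseteq> {..<n}" using c tn by auto
    then have "C \<subseteq> {..<n}" unfolding C_def using i by (intro sw_sub)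
    moreover have "C \<inter> N = {}" unfolding C_def N_def using c tn by auto
    ultimately show ?thesis by auto
  qed
  have cardC: "card C = c - (n - t)" unfolding C_def sw_card by simp
  note ctx = tn Nsub cardN Csub _ mt
  have gi: "G n N C l 0 m i m i = \<lparr>ls_time = m, ls_init = True, ls_decided = None, ls_rd = None, ls_cnt = c\<rparr>"
    using gen_i[where q=0 and l=l and i=i and m=m, OF tn Nsub cardN Csub _ mt] m1 c cardC by simp
  have gu: "ls_decided (G n N C l 0 m i m a) = None" for a
    using gen_undec[where q=0 and l=l and i=i and m=m and a=a, OF tn Nsub cardN Csub _ mt] by simp
  have r: "((N, Fgen N l 0 m i C), inigen l 0) \<in> runs n t"
    using Nsub cardN tn by (intro runs_mem) (auto simp: Fgen_def)
  show ?thesis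
    apply (rule bexI[OF _ r])
    using gi gu by (simp add: lst_def jdecided0_def)
qed

lemma W2: assumes tn: "t + 2 \<le> n" and i: "i < n" and mt: "m \<le> t" and c: "c \<le> n - m"
   "m = 0 \<Longrightarrow> c = 0" "0 < m \<Longrightarrow> n - t \<le> c"
  shows "\<exists>r\<in>runs n t. lst n (Pbasic n) r m i = \<lparr>ls_time = m, ls_init = True, ls_decided = None, ls_rd = None, ls_cnt = c\<rparr>
     \<and> (\<exists>j<n. deciding0 n (Pbasic n) r m j)"
proof -
  define N where "N = sw i ` ({0, 1} \<union> {t+2..<n})"
  define C where "C = sw i ` {m+2..<m+2 + (c - (n - t))}"
  define l :: "nat \<Rightarrow> nat" where "l j = sw i (Suc m - j)" for j
  define q where "q = Suc m"
  have tn': "t < n" using tn by simp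
  have Nsub: "N \<subseteq> {..<n}" unfolding N_def using i tn by (intro sw_sub) auto
  have cardN: "card N = n - t" unfolding N_def sw_card using tn by (subst card_Un_disjoint) auto
  have cle: "c - (n - t) \<le> t - m" using c mt tn by auto
  have Csub: "C \<subseteq> {..<n} - N"
  proof -
    have "{m+2..<m+2 + (c - (n - t))} \<subseteq> {..<n}" using cle mt tn by auto
    then have "C \<subseteq> {..<n}" unfolding C_def using i by (intro sw_sub)
    moreover have "C \<inter> N = {}" unfolding C_def N_def using cle mt tn by auto
    ultimately show ?thesis by auto
  qed
  have cardC: "card C = c - (n - t)" unfolding C_def sw_card by simp
  have qm: "q \<le> Suc m" and mt': "m \<le> Suc t" using mt by (auto simp: q_def)
  have lrange: "\<forall>j<q. l j < n" unfolding l_def q_def using i mt tn by (auto simp: sw_lt)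
  have linj: "inj_on l {..<q}" unfolding l_def q_def inj_on_def by auto
  have li: "\<forall>j<q. l j \<noteq> i" unfolding l_def q_def by simp
  have lC: "\<forall>j<q. l j \<notin> C" unfolding l_def q_def C_def by auto
  have lN: "\<forall>j<q. j < m \<longrightarrow> l j \<notin> N" unfolding l_def q_def N_def using mt by auto
  have iq: "i \<notin> l ` {..<q}" using li by auto
  have gi: "G n N C l q m i m i = \<lparr>ls_time = m, ls_init = True, ls_decided = None, ls_rd = None, ls_cnt = c\<rparr>"
    using gen_i[OF tn' Nsub cardN Csub qm mt' lrange linj li lC lN iq] c cardC by auto
  have gc: "ls_decided (G n N C l q m i m (l m)) = None \<and> ls_decided (G n N C l q m i (Suc m) (l m)) = Some False"
    using gen_chain[OF tn' Nsub cardN Csub qm mt' lrange linj li lC lN q_def] .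
  have lm: "l m < n" using lrange q_def by simp
  have r: "((N, Fgen N l q m i C), inigen l q) \<in> runs n t"
    using Nsub cardN tn' by (intro runs_mem) (auto simp: Fgen_def)
  show ?thesis
    apply (rule bexI[OF _ r])
    using gi gc lm by (auto simp: lst_def deciding0_def)
qed

lemma W3: assumes tn: "t < n" and i: "i < n" and m2: "2 \<le> m" and mt: "m \<le> Suc t"
  shows "\<exists>r\<in>runs n t. lst n (Pbasic n) r m i = \<lparr>ls_time = m, ls_init = True, ls_decided = None, ls_rd = Some True, ls_cnt = 0\<rparr>
     \<and> (\<forall>j<n. \<not> jdecided0 n (Pbasic n) r m j)"
proof -
  define N where "N = sw i ` ({0} \<union> {Suc t..<n})"
  define f where "f = sw i 1"
  have Nsub: "N \<subseteq> {..<n}" unfolding N_def using i tn by (intro sw_sub) auto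
  have cardN: "card N = n - t" unfolding N_def sw_card using tn by (subst card_Un_disjoint) auto
  have fn: "f < n" unfolding f_def using i tn m2 mt by (simp add: sw_lt)
  have fN: "f \<notin> N" unfolding f_def N_def using m2 mt by auto
  have fi: "f \<noteq> i" unfolding f_def by simp
  have r: "((N, F1 N f i m), \<lambda>_. True) \<in> runs n t"
    using Nsub cardN tn by (intro runs_mem) (auto simp: F1_def)
  show ?thesis
    apply (rule bexI[OF _ r])
    using R1_final[OF tn Nsub cardN fn fN fi m2 mt] R1_nodec[OF tn Nsub cardN fn fN fi m2 mt]
    by (auto simp: lst_def jdecided0_def)
qed

lemma constr:
  fixes n t m i :: nat and fp ini
  defines "gg \<equiv> gstate n (Pbasic n) fp ini"
  assumes so: "fp \<in> SO n t" and tn: "t < n" and dec: "ls_decided (gg m i) = None"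
  shows "0 < m \<Longrightarrow> m \<le> Suc t"
    and "0 < m \<Longrightarrow> ls_rd (gg m i) = None \<Longrightarrow> n - t \<le> ls_cnt (gg m i)"
    and "ls_rd (gg m i) = Some True \<Longrightarrow> 2 \<le> m \<and> ls_cnt (gg m i) = 0"
proof -
  have before: "ls_decided (gg k i) = None \<and> ls_rd (gg k i) = None \<and> \<not> int (ls_cnt (gg k i)) > int n - int k" if "k < m" for k
  proof -
    have "ls_decided (gg k i) = None \<and> Pbasic n i (gg k i) = Noop"
      using undec_before[of n fp ini m i k] dec that unfolding gg_def by blast
    then show ?thesis using Noop_undec[of "gg k i" n i] unfolding gg_def by auto
  qed
  show "m \<le> Suc t" if "0 < m"
  proof (cases m)
    case 0 then show ?thesis using that by simp
  next
    case (Suc m')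
    show ?thesis
    proof (cases m')
      case 0 then show ?thesis using Suc by simp
    next
      case (Suc k)
      have rd: "\<forall>j. 1 \<le> j \<and> j \<le> Suc k \<longrightarrow> ls_rd (gg j i) = None" using before \<open>m = Suc m'\<close> Suc by auto
      have "n - t \<le> ls_cnt (gg (Suc k) i)"
        using Ncount[OF so] rd before[of k] \<open>m = Suc m'\<close> Suc unfolding gg_def by auto
      moreover have "\<not> int (ls_cnt (gg (Suc k) i)) > int n - int (Suc k)" using before[of "Suc k"] \<open>m = Suc m'\<close> Suc by auto
      ultimately show ?thesis using \<open>m = Suc m'\<close> Suc tn by linarith
    qed
  qed
  show "n - t \<le> ls_cnt (gg m i)" if m0: "0 < m" and rdn: "ls_rd (gg m i) = None"
  proof -
    obtain k where k: "m = Suc k" using m0 by (cases m) auto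
    have rd: "\<forall>j. 1 \<le> j \<and> j \<le> Suc k \<longrightarrow> ls_rd (gg j i) = None" using before k rdn
      by (metis le_neq_implies_less)
    show ?thesis using Ncount[OF so] rd before[of k] k unfolding gg_def by auto
  qed
  show "2 \<le> m \<and> ls_cnt (gg m i) = 0" if rdT: "ls_rd (gg m i) = Some True"
  proof -
    have "m \<noteq> 0" using rdT unfolding gg_def by (cases m) (auto simp: init_state_def)
    then obtain k where k: "m = Suc k" by (cases m) auto
    have "k \<noteq> 0"
    proof
      assume "k = 0"
      then obtain b where "Pbasic n b (gg 0 b) = Decide True" using rd_True rdT k unfolding gg_def by blast
      then show False using Pb_0 unfolding gg_def by simp
    qed
    then show ?thesis using k cnt_True rdT unfolding gg_def by auto
  qed
qed

lemma s_eq: "ls_time s = m \<Longrightarrow> ls_init s \<Longrightarrow> ls_decided s = None \<Longrightarrow> ls_rd s = rv \<Longrightarrow> ls_cnt s = cv \<Longrightarrow>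
  \<lparr>ls_time = m, ls_init = True, ls_decided = None, ls_rd = rv, ls_cnt = cv\<rparr> = s"
  by (cases s) simp

lemma K0_true: assumes "ls_rd s = Some False"
  shows "knows n t (Pbasic n) i s (\<lambda>r m. \<exists>j<n. jdecided0 n (Pbasic n) r m j)"
  unfolding knows_def
proof (intro ballI allI impI)
  fix r' m' assume r': "r' \<in> runs n t" and eq: "lst n (Pbasic n) r' m' i = s"
  obtain fp ini where rr: "r' = (fp, ini)" by (cases r') auto
  have rd: "ls_rd (gstate n (Pbasic n) fp ini m' i) = Some False" using eq assms rr by (simp add: lst_def)
  then have "m' \<noteq> 0" by (cases m') (auto simp: init_state_def)
  then obtain k where k: "m' = Suc k" by (cases m') auto
  obtain b where b: "b < n" "Pbasic n b (gstate n (Pbasic n) fp ini k b) = Decide False"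
    using rd_False rd k by blast
  have "ls_decided (gstate n (Pbasic n) fp ini k b) = None" using b(2) Pb_decided by fastforce
  moreover have "ls_decided (gstate n (Pbasic n) fp ini (Suc k) b) = Some False" using b(2) by (simp add: g_dec_step)
  ultimately show "\<exists>j<n. jdecided0 n (Pbasic n) r' m' j" using b(1) k rr by (auto simp: jdecided0_def lst_def)
qed

lemma K1_true: assumes "Pbasic n i s = Decide True"
  shows "knows n t (Pbasic n) i s (\<lambda>r m. \<forall>j<n. \<not> deciding0 n (Pbasic n) r m j)"
  unfolding knows_def
proof (intro ballI allI impI)
  fix r' m' j assume r': "r' \<in> runs n t" and eq: "lst n (Pbasic n) r' m' i = s" and j: "j < n"
  obtain fp ini where rr: "r' = (fp, ini)" by (cases r') auto
  have "Pbasic n i (gstate n (Pbasic n) fp ini m' i) = Decide True" using eq assms rr by (simp add: lst_def)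
  then have "\<not> Z n fp ini m'" by (rule L_dec1)
  then show "\<not> deciding0 n (Pbasic n) r' m' j" using j rr unfolding Z_def deciding0_def lst_def by auto
qed

lemma not_knows: "r \<in> runs n t \<Longrightarrow> lst n P r m i = s \<Longrightarrow> \<not> \<phi> r m \<Longrightarrow> \<not> knows n t P i s \<phi>"
  unfolding knows_def by blast

theorem mainTheorem5:
  fixes n t :: nat
  assumes "t + 2 \<le> n"
  shows "implements n t (Pbasic n)"
  unfolding implements_def
proof (intro allI impI ballI)
  fix i r m assume i: "i < n" and r: "r \<in> runs n t"
  have tn: "t < n" using assms by simp
  obtain fp ini where rr: "r = (fp, ini)" by (cases r) auto
  have so: "fp \<in> SO n t" using r rr by (simp add: runs_def)
  define s where "s = lst n (Pbasic n) r m i"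
  have sg: "s = gstate n (Pbasic n) fp ini m i" using rr by (simp add: s_def lst_def)
  have time: "ls_time s = m" using sg by simp
  show "Pbasic n i s = P0 n t (Pbasic n) i s"
  proof (cases "ls_decided s = None \<and> ls_init s \<and> ls_rd s \<noteq> Some False")
    case False
    then consider "ls_decided s \<noteq> None" | "ls_decided s = None" "\<not> ls_init s"
      | "ls_decided s = None" "ls_init s" "ls_rd s = Some False" by fastforce
    then show ?thesis
    proof cases
      case 3
      then show ?thesis using K0_true[OF 3(3), where n=n and t=t and i=i] by (simp add: Pbasic_def P0_def)
    qed (auto simp: Pbasic_def P0_def)
  next
    case True
    then have dec: "ls_decided s = None" and ini: "ls_init s" and nrd: "ls_rd s \<noteq> Some False" by auto
    have decg: "ls_decided (gstate n (Pbasic n) fp ini m i) = None" using dec sg by simp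
    have C1: "0 < m \<Longrightarrow> m \<le> Suc t" using constr(1)[OF so tn decg] by simp
    have C2: "0 < m \<Longrightarrow> ls_rd s = None \<Longrightarrow> n - t \<le> ls_cnt s" using constr(2)[OF so tn decg] sg by simp
    have C3: "ls_rd s = Some True \<Longrightarrow> 2 \<le> m \<and> ls_cnt s = 0" using constr(3)[OF so tn decg] sg by simp
    have C0: "m = 0 \<Longrightarrow> ls_cnt s = 0 \<and> ls_rd s = None" using sg by (simp add: init_state_def)
    have cle: "ls_cnt s \<le> n" using sg cnt_le by simp
    have eta: "\<lparr>ls_time = m, ls_init = True, ls_decided = None, ls_rd = rv, ls_cnt = cv\<rparr> = s"
      if "ls_rd s = rv" "ls_cnt s = cv" for rv cv using s_eq[OF time ini dec that] .
    have nK0: "\<not> knows n t (Pbasic n) i s (\<lambda>r m. \<exists>j<n. jdecided0 n (Pbasic n) r m j)"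
    proof (cases "m = 0")
      case True
      have "\<not> (\<exists>j<n. jdecided0 n (Pbasic n) r m j)" using True by (simp add: jdecided0_def)
      then show ?thesis using not_knows[OF r s_def[symmetric], where \<phi>="\<lambda>r m. \<exists>j<n. jdecided0 n (Pbasic n) r m j"] by simp
    next
      case False
      show ?thesis
      proof (cases "ls_rd s")
        case None
        have m1: "1 \<le> m" "0 < m" using False by auto
        have mt: "m \<le> Suc t" using C1 m1(2) .
        have cge: "n - t \<le> ls_cnt s" using C2 m1(2) None .
        obtain r' where "r' \<in> runs n t" "lst n (Pbasic n) r' m i = \<lparr>ls_time = m, ls_init = True, ls_decided = None, ls_rd = None, ls_cnt = ls_cnt s\<rparr>"
          "\<forall>j<n. \<not> jdecided0 n (Pbasic n) r' m j"
          using W1[OF tn i m1(1) mt cge cle] by blast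
        then show ?thesis using not_knows[where \<phi>="\<lambda>r m. \<exists>j<n. jdecided0 n (Pbasic n) r m j" and m=m] eta[OF None refl] by simp
      next
        case (Some v)
        then have v: "ls_rd s = Some True" using nrd by (cases v) auto
        have m2: "2 \<le> m" "ls_cnt s = 0" using C3[OF v] by auto
        have mt: "m \<le> Suc t" using C1 m2(1) by simp
        obtain r' where "r' \<in> runs n t" "lst n (Pbasic n) r' m i = \<lparr>ls_time = m, ls_init = True, ls_decided = None, ls_rd = Some True, ls_cnt = 0\<rparr>"
          "\<forall>j<n. \<not> jdecided0 n (Pbasic n) r' m j"
          using W3[OF tn i m2(1) mt] by blast
        then show ?thesis using not_knows[where \<phi>="\<lambda>r m. \<exists>j<n. jdecided0 n (Pbasic n) r m j" and m=m] eta[OF v m2(2)] by simp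
      qed
    qed
    show ?thesis
    proof (cases "int (ls_cnt s) > int n - int m \<or> ls_rd s = Some True")
      case True
      then have pb: "Pbasic n i s = Decide True" using dec ini nrd time by (auto simp: Pbasic_def)
      show ?thesis using pb K1_true[OF pb, where t=t] nK0 dec ini by (simp add: P0_def)
    next
      case False
      then have pb: "Pbasic n i s = Noop" using dec ini nrd time by (auto simp: Pbasic_def)
      have rdN: "ls_rd s = None" using False nrd by (cases "ls_rd s") auto
      have cm: "ls_cnt s \<le> n - m" "m \<le> n" using False by auto
      have mt: "m \<le> t"
      proof (cases "m = 0")
        case False
        then have "n - t \<le> ls_cnt s" using C2 rdN by simp
        then show ?thesis using cm tn by linarith
      qed simp
      have c0: "m = 0 \<Longrightarrow> ls_cnt s = 0" using C0 by blast
      have c1: "0 < m \<Longrightarrow> n - t \<le> ls_cnt s" using C2 rdN by blast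
      obtain r' where "r' \<in> runs n t" "lst n (Pbasic n) r' m i = \<lparr>ls_time = m, ls_init = True, ls_decided = None, ls_rd = None, ls_cnt = ls_cnt s\<rparr>"
        "\<exists>j<n. deciding0 n (Pbasic n) r' m j"
        using W2[OF assms i mt cm(1) c0 c1] by blast
      then have "r' \<in> runs n t" "lst n (Pbasic n) r' m i = s" "\<exists>j<n. deciding0 n (Pbasic n) r' m j"
        using eta[OF rdN refl] by auto
      then have nK1: "\<not> knows n t (Pbasic n) i s (\<lambda>r m. \<forall>j<n. \<not> deciding0 n (Pbasic n) r m j)"
        using not_knows[of r' n t "Pbasic n" m i s "\<lambda>r m. \<forall>j<n. \<not> deciding0 n (Pbasic n) r m j"] by simp
      show ?thesis using pb nK0 nK1 dec ini by (simp add: P0_def)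
    qed
  qed
qed


end
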